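(* Let $M[P,Q]$ be a lattice path matroid on $\{1,\dots,m+r\}$ with presentation $(N_i: i\in\{1,\dots,r\})$, $N_i=[s_i,t_i]$. Suppose there exist an integer $x$ and an index $1\le j\le r-1$ such that $s_j<x<t_j$ and $s_{j+1}<x+1<t_{j+1}$. Then $P(M[P,Q])$ has a nontrivial hyperplane split.
   Context: A lattice path is a path from $(0,0)$ using unit steps East $(1,0)$ and North $(0,1)$. Let $P=p_1\dots p_{m+r}$ and $Q=q_1\dots q_{m+r}$ be lattice paths from $(0,0)$ to $(m,r)$ with $P$ never going above $Q$; let the North steps of $P$ be $p_{s_1},\dots,p_{s_r}$ with $s_1<\dots<s_r$ and those of $Q$ be $q_{t_1},\dots,q_{t_r}$ with $t_1<\dots<t_r$, and let $N_i=[s_i,t_i]=\{s_i,s_i+1,\dots,t_i\}$. The lattice path matroid $M[P,Q]$ is the transversal matroid on $\{1,\dots,m+r\}$ with presentation $(N_1,\dots,N_r)$: its independent sets are the partial transversals, i.e. sets $\{x_k:k\in K\}$ of $|K|$ distinct elements with $x_k\in N_k$, $K\subseteq\{1,\dots,r\}$. For a matroid $N$ on $E=\{1,\dots,n\}$, $P(N)=\mathrm{conv}\{\sum_{i\in B}e_i : B \text{ a base of } N\}\subset\mathbb{R}^n$; a hyperplane split of $P(N)$ is an expression $P(N)=P(N_1)\cup P(N_2)$ with $N_1,N_2$ matroids on $E$ such that $P(N_1)\cap P(N_2)$ is a face of both, and it is nontrivial if $P(N_1)\neq P(N)\neq P(N_2)$. *)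

theory Defs
  imports "HOL-Analysis.Analysis" "HOL-Library.Function_Algebras"
begin

text \<open>Points of R^n are represented as functions nat => real; the polytopes
below live in the coordinates 1..n (all other coordinates are 0).
We equip function spaces with the pointwise real vector space structure
so that the library notions convex hull and face_of apply.\<close>

instantiation "fun" :: (type, real_vector) real_vector
begin
definition scaleR_fun :: "real \<Rightarrow> ('a \<Rightarrow> 'b) \<Rightarrow> 'a \<Rightarrow> 'b"
  where "scaleR_fun c f = (\<lambda>x. c *\<^sub>R f x)"
instance
  by standard (auto simp: scaleR_fun_def fun_eq_iff scaleR_add_right scaleR_add_left)
end

text \<open>A lattice path is a word in E/N steps; we encode it as a bool list,
True = North step (0,1), False = East step (1,0).\<close>

definition lattice_path :: "nat \<Rightarrow> nat \<Rightarrow> bool list \<Rightarrow> bool" where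
  "lattice_path m r p \<longleftrightarrow> length p = m + r \<and> length (filter id p) = r"

definition height :: "bool list \<Rightarrow> nat \<Rightarrow> nat" where
  "height p k = length (filter id (take k p))"

definition never_above :: "bool list \<Rightarrow> bool list \<Rightarrow> bool" where
  "never_above P Q \<longleftrightarrow> (\<forall>k \<le> length P. height P k \<le> height Q k)"

definition north_steps :: "bool list \<Rightarrow> nat list" where
  "north_steps p = filter (\<lambda>k. p ! (k - 1)) [1..<length p + 1]"

text \<open>Position of the i-th North step (1-based i).\<close>
definition north_pos :: "bool list \<Rightarrow> nat \<Rightarrow> nat" where
  "north_pos p i = north_steps p ! (i - 1)"

text \<open>Presentation interval N_i of M[P,Q]: between the i-th North step of the
upper path Q and the i-th North step of the lower path P.\<close>
definition lpm_interval :: "bool list \<Rightarrow> bool list \<Rightarrow> nat \<Rightarrow> nat set" where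
  "lpm_interval P Q i = {north_pos Q i .. north_pos P i}"

text \<open>Independent sets of M[P,Q]: partial transversals of (N_1,...,N_r).\<close>
definition lpm_indep :: "nat \<Rightarrow> bool list \<Rightarrow> bool list \<Rightarrow> nat set \<Rightarrow> bool" where
  "lpm_indep r P Q I \<longleftrightarrow>
     (\<exists>K f. K \<subseteq> {1..r} \<and> bij_betw f K I \<and> (\<forall>k\<in>K. f k \<in> lpm_interval P Q k))"

definition lpm_bases :: "nat \<Rightarrow> bool list \<Rightarrow> bool list \<Rightarrow> nat set set" where
  "lpm_bases r P Q = {B. lpm_indep r P Q B \<and> (\<forall>I. lpm_indep r P Q I \<and> B \<subseteq> I \<longrightarrow> I = B)}"

definition matroid_bases :: "nat set \<Rightarrow> nat set set \<Rightarrow> bool" where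
  "matroid_bases E \<B> \<longleftrightarrow>
     \<B> \<noteq> {} \<and> (\<forall>B\<in>\<B>. B \<subseteq> E) \<and>
     (\<forall>B1\<in>\<B>. \<forall>B2\<in>\<B>. \<forall>x\<in>B1 - B2. \<exists>y\<in>B2 - B1. insert y (B1 - {x}) \<in> \<B>)"

definition indicator_vec :: "nat set \<Rightarrow> (nat \<Rightarrow> real)" where
  "indicator_vec B = (\<lambda>i. if i \<in> B then 1 else 0)"

definition base_polytope :: "nat set set \<Rightarrow> (nat \<Rightarrow> real) set" where
  "base_polytope \<B> = convex hull (indicator_vec ` \<B>)"

definition has_nontrivial_hyperplane_split :: "nat set \<Rightarrow> nat set set \<Rightarrow> bool" where
  "has_nontrivial_hyperplane_split E \<B> \<longleftrightarrow>
     (\<exists>\<B>1 \<B>2. matroid_bases E \<B>1 \<and> matroid_bases E \<B>2 \<and>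
        base_polytope \<B> = base_polytope \<B>1 \<union> base_polytope \<B>2 \<and>
        (base_polytope \<B>1 \<inter> base_polytope \<B>2) face_of base_polytope \<B>1 \<and>
        (base_polytope \<B>1 \<inter> base_polytope \<B>2) face_of base_polytope \<B>2 \<and>
        base_polytope \<B>1 \<noteq> base_polytope \<B> \<and> base_polytope \<B>2 \<noteq> base_polytope \<B>)"

end

theory Submission
  imports Defs
begin


definition cnt :: "nat set \<Rightarrow> nat \<Rightarrow> nat" where
  "cnt S t = card {s\<in>S. s \<le> t}"

definition NS :: "bool list \<Rightarrow> nat set" where
  "NS p = {k. 1 \<le> k \<and> k \<le> length p \<and> p ! (k - 1)}"

lemma sum_fun_apply: "(sum f S) i = sum (\<lambda>x. f x i) S"
  by (induction S rule: infinite_finite_induct) auto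

lemma height_cnt: "height p t = cnt (NS p) t"
proof -
  have "height p t = card {i. i < min t (length p) \<and> p ! i}"
    unfolding height_def length_filter_conv_card by (rule arg_cong[where f=card]) auto
  also have "\<dots> = card (Suc ` {i. i < min t (length p) \<and> p ! i})"
    by (simp add: card_image)
  also have "Suc ` {i. i < min t (length p) \<and> p ! i} = {s\<in>NS p. s \<le> t}"
  proof
    show "Suc ` {i. i < min t (length p) \<and> p ! i} \<subseteq> {s\<in>NS p. s \<le> t}"
      unfolding NS_def by auto
    show "{s\<in>NS p. s \<le> t} \<subseteq> Suc ` {i. i < min t (length p) \<and> p ! i}"
    proof
      fix s assume "s \<in> {s\<in>NS p. s \<le> t}"
      then have "s = Suc (s - 1)" "s - 1 < min t (length p)" "p ! (s - 1)"
        unfolding NS_def by auto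
      then show "s \<in> Suc ` {i. i < min t (length p) \<and> p ! i}" by blast
    qed
  qed
  finally show ?thesis unfolding cnt_def .
qed

lemma set_north_steps: "set (north_steps p) = NS p"
  unfolding north_steps_def NS_def by auto

lemma sorted_north_steps: "sorted_wrt (<) (north_steps p)"
  unfolding north_steps_def by (rule sorted_wrt_filter) (rule sorted_wrt_upt)

lemma finite_NS: "finite (NS p)" unfolding NS_def by auto

lemma length_north_steps: "length (north_steps p) = card (NS p)"
  by (metis distinct_card set_north_steps sorted_north_steps strict_sorted_iff)

lemma sorted_nth_le_iff:
  fixes xs :: "nat list"
  assumes s: "sorted_wrt (<) xs" and i: "i < length xs"
  shows "xs ! i \<le> t \<longleftrightarrow> Suc i \<le> card {x\<in>set xs. x \<le> t}"
proof -
  have dist: "distinct xs" using s strict_sorted_iff by blast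
  have eq: "{x\<in>set xs. x \<le> t} = (\<lambda>l. xs ! l) ` {l. l < length xs \<and> xs ! l \<le> t}"
    by (auto simp: in_set_conv_nth)
  have inj: "inj_on (\<lambda>l. xs ! l) {l. l < length xs \<and> xs ! l \<le> t}"
    using dist by (auto simp: inj_on_def nth_eq_iff_index_eq)
  have c: "card {x\<in>set xs. x \<le> t} = card {l. l < length xs \<and> xs ! l \<le> t}"
    using eq inj card_image by (metis (no_types, lifting))
  show ?thesis
  proof
    assume a: "xs ! i \<le> t"
    have "{..i} \<subseteq> {l. l < length xs \<and> xs ! l \<le> t}"
    proof
      fix l assume "l \<in> {..i}"
      then have "l \<le> i" by simp
      then have "xs ! l \<le> xs ! i" using s i
        using sorted_wrt_nth_less[OF s, of l i] by (cases "l = i") auto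
      then show "l \<in> {l. l < length xs \<and> xs ! l \<le> t}" using a i \<open>l \<le> i\<close> by auto
    qed
    then have "card {..i} \<le> card {l. l < length xs \<and> xs ! l \<le> t}"
      by (intro card_mono) auto
    then show "Suc i \<le> card {x\<in>set xs. x \<le> t}" using c by simp
  next
    assume a: "Suc i \<le> card {x\<in>set xs. x \<le> t}"
    show "xs ! i \<le> t"
    proof (rule ccontr)
      assume "\<not> xs ! i \<le> t"
      then have "{l. l < length xs \<and> xs ! l \<le> t} \<subseteq> {..<i}"
      proof (intro subsetI)
        fix l assume "\<not> xs ! i \<le> t" "l \<in> {l. l < length xs \<and> xs ! l \<le> t}"
        then have "l < length xs" "xs ! l < xs ! i" by auto
        then show "l \<in> {..<i}"
          using s i sorted_wrt_nth_less[OF s, of i l] by (cases "i < l"; cases "i = l") auto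
      qed
      then have "card {l. l < length xs \<and> xs ! l \<le> t} \<le> i"
        by (metis card_lessThan card_mono finite_lessThan)
      then show False using a c by simp
    qed
  qed
qed

lemma north_pos_le_iff:
  assumes "1 \<le> k" "k \<le> card (NS p)"
  shows "north_pos p k \<le> t \<longleftrightarrow> k \<le> height p t"
proof -
  have "north_pos p k \<le> t \<longleftrightarrow> Suc (k - 1) \<le> card {x\<in>set (north_steps p). x \<le> t}"
    unfolding north_pos_def using assms
    by (intro sorted_nth_le_iff sorted_north_steps) (auto simp: length_north_steps)
  then show ?thesis using assms by (simp add: height_cnt cnt_def set_north_steps)
qed

lemma north_pos_in:
  assumes "1 \<le> k" "k \<le> card (NS p)"
  shows "north_pos p k \<in> NS p"
proof -
  have "k - 1 < length (north_steps p)" using assms by (simp add: length_north_steps)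
  then show ?thesis unfolding north_pos_def using nth_mem set_north_steps by metis
qed

lemma north_pos_mono:
  assumes "1 \<le> a" "a < b" "b \<le> card (NS p)"
  shows "north_pos p a < north_pos p b"
  unfolding north_pos_def using assms
  by (intro sorted_wrt_nth_less[OF sorted_north_steps]) (auto simp: length_north_steps)

lemma card_NS: "lattice_path m r p \<Longrightarrow> card (NS p) = r"
proof -
  assume "lattice_path m r p"
  then have "height p (length p) = r" unfolding lattice_path_def height_def by simp
  moreover have "{s\<in>NS p. s \<le> length p} = NS p" unfolding NS_def by auto
  ultimately show ?thesis by (simp add: height_cnt cnt_def)
qed




definition CF :: "(nat \<Rightarrow> nat) \<Rightarrow> (nat \<Rightarrow> nat) \<Rightarrow> nat \<Rightarrow> nat \<Rightarrow> nat set set" where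
  "CF lo hi n r = {B. B \<subseteq> {1..n} \<and> card B = r \<and> (\<forall>t. lo t \<le> cnt B t \<and> cnt B t \<le> hi t)}"

lemma cnt_le_card: "finite S \<Longrightarrow> cnt S t \<le> card S"
  unfolding cnt_def by (intro card_mono) auto

lemma cnt_full: "finite S \<Longrightarrow> S \<subseteq> {..n} \<Longrightarrow> n \<le> t \<Longrightarrow> cnt S t = card S"
  unfolding cnt_def by (rule arg_cong[where f=card]) auto

lemma cnt_mono: "finite S \<Longrightarrow> s \<le> t \<Longrightarrow> cnt S s \<le> cnt S t"
  unfolding cnt_def by (intro card_mono) auto

lemma cnt_split: "finite S \<Longrightarrow> cnt S t + card {s\<in>S. t < s} = card S"
proof -
  assume f: "finite S"
  have "card ({s\<in>S. s \<le> t} \<union> {s\<in>S. t < s}) = card {s\<in>S. s \<le> t} + card {s\<in>S. t < s}"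
    using f by (intro card_Un_disjoint) auto
  moreover have "{s\<in>S. s \<le> t} \<union> {s\<in>S. t < s} = S" by auto
  ultimately show ?thesis unfolding cnt_def by simp
qed

lemma cnt_Suc: "finite S \<Longrightarrow> cnt S (Suc t) = cnt S t + (if Suc t \<in> S then 1 else 0)"
proof -
  assume f: "finite S"
  show ?thesis
  proof (cases "Suc t \<in> S")
    case True
    then have "{s\<in>S. s \<le> Suc t} = insert (Suc t) {s\<in>S. s \<le> t}" by auto
    then show ?thesis using True f unfolding cnt_def by simp
  next
    case False
    then have "{s\<in>S. s \<le> Suc t} = {s\<in>S. s \<le> t}" using le_Suc_eq by auto
    then show ?thesis using False unfolding cnt_def by simp
  qed
qed

lemma cnt_pred: "finite S \<Longrightarrow> b \<in> S \<Longrightarrow> 1 \<le> b \<Longrightarrow> cnt S b = Suc (cnt S (b - 1))"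
  using cnt_Suc[of S "b - 1"] by simp

lemma cnt_zero: "0 \<notin> S \<Longrightarrow> cnt S 0 = 0"
  unfolding cnt_def by (simp add: Collect_conv_if)

locale lpm =
  fixes m r :: nat and P Q :: "bool list"
  assumes lpP: "lattice_path m r P" and lpQ: "lattice_path m r Q" and na: "never_above P Q"
begin

lemma lenP: "length P = m + r" using lpP unfolding lattice_path_def by simp
lemma lenQ: "length Q = m + r" using lpQ unfolding lattice_path_def by simp

lemma NPP: "1 \<le> k \<Longrightarrow> k \<le> r \<Longrightarrow> north_pos P k \<le> t \<longleftrightarrow> k \<le> height P t"
  using north_pos_le_iff card_NS[OF lpP] by simp
lemma NPQ: "1 \<le> k \<Longrightarrow> k \<le> r \<Longrightarrow> north_pos Q k \<le> t \<longleftrightarrow> k \<le> height Q t"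
  using north_pos_le_iff card_NS[OF lpQ] by simp

lemma height_le_r: "lattice_path m r p \<Longrightarrow> height p t \<le> r"
  using cnt_le_card[OF finite_NS] card_NS height_cnt by metis

lemma hPQ: "height P t \<le> height Q t"
proof (cases "t \<le> length P")
  case True then show ?thesis using na unfolding never_above_def by blast
next
  case False
  then have "take t P = take (length P) P" "take t Q = take (length P) Q" using lenP lenQ by auto
  then have "height P t = height P (length P)" "height Q t = height Q (length P)"
    unfolding height_def by simp_all
  then show ?thesis using na unfolding never_above_def by simp
qed

lemma NS_sub: "NS p \<subseteq> {1..length p}" unfolding NS_def by auto

lemma posP: "1 \<le> k \<Longrightarrow> k \<le> r \<Longrightarrow> north_pos P k \<in> {1..m+r}"
  using north_pos_in[of k P] card_NS[OF lpP] NS_sub[of P] lenP by force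
lemma posQ: "1 \<le> k \<Longrightarrow> k \<le> r \<Longrightarrow> north_pos Q k \<in> {1..m+r}"
  using north_pos_in[of k Q] card_NS[OF lpQ] NS_sub[of Q] lenQ by force

lemma QleP: "1 \<le> k \<Longrightarrow> k \<le> r \<Longrightarrow> north_pos Q k \<le> north_pos P k"
  using NPP[of k "north_pos P k"] NPQ[of k "north_pos P k"] hPQ[of "north_pos P k"] by simp

lemma monoP: "1 \<le> a \<Longrightarrow> a < b \<Longrightarrow> b \<le> r \<Longrightarrow> north_pos P a < north_pos P b"
  using north_pos_mono card_NS[OF lpP] by simp

lemma interval_sub: "k \<in> {1..r} \<Longrightarrow> lpm_interval P Q k \<subseteq> {1..m+r}"
  unfolding lpm_interval_def using posP posQ by fastforce

lemma aug:
  "k0 \<in> {1..r} \<Longrightarrow> k0 \<notin> K \<Longrightarrow> K \<subseteq> {1..r} \<Longrightarrow> bij_betw f K I \<Longrightarrow>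
   (\<forall>k\<in>K. f k \<in> lpm_interval P Q k) \<Longrightarrow> \<exists>e. e \<notin> I \<and> lpm_indep r P Q (insert e I)"
proof (induction "r - k0" arbitrary: k0 K f rule: less_induct)
  case less
  define e where "e = north_pos P k0"
  have eN: "e \<in> lpm_interval P Q k0"
    unfolding e_def lpm_interval_def using QleP less.prems(1) by auto
  show ?case
  proof (cases "e \<in> I")
    case False
    have "bij_betw (f(k0 := e)) (insert k0 K) (insert e I)"
      using less.prems(2,4) False unfolding bij_betw_def inj_on_def by auto
    moreover have "\<forall>k\<in>insert k0 K. (f(k0 := e)) k \<in> lpm_interval P Q k"
      using less.prems(2,5) eN by auto
    ultimately have "lpm_indep r P Q (insert e I)"
      unfolding lpm_indep_def using less.prems(1,3) by (intro exI[of _ "insert k0 K"] exI[of _ "f(k0 := e)"]) auto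
    then show ?thesis using False by blast
  next
    case True
    define k1 where "k1 = inv_into K f e"
    have k1K: "k1 \<in> K" and fk1: "f k1 = e"
      using True less.prems(4) unfolding k1_def bij_betw_def
      by (auto intro: inv_into_into f_inv_into_f)
    have k1r: "k1 \<in> {1..r}" using k1K less.prems(3) by auto
    have "e \<le> north_pos P k1" using less.prems(5) k1K fk1 unfolding lpm_interval_def by auto
    then have "k0 \<le> k1" using monoP[of k1 k0] k1r less.prems(1) unfolding e_def
      by (metis atLeastAtMost_iff not_le)
    moreover have "k1 \<noteq> k0" using k1K less.prems(2) by auto
    ultimately have lt: "r - k1 < r - k0" using k1r by auto
    define K' where "K' = insert k0 (K - {k1})"
    define f' where "f' = f(k0 := e)"
    have inj: "inj_on f K" using less.prems(4) unfolding bij_betw_def by auto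
    have "bij_betw f' K' I"
      unfolding bij_betw_def
    proof
      show "inj_on f' K'" unfolding inj_on_def K'_def f'_def
        using inj k1K fk1 less.prems(2) unfolding inj_on_def by auto
      show "f' ` K' = I" unfolding K'_def f'_def
        using less.prems(2,4) k1K fk1 unfolding bij_betw_def by auto
    qed
    moreover have "\<forall>k\<in>K'. f' k \<in> lpm_interval P Q k"
      unfolding K'_def f'_def using less.prems(2,5) eN by auto
    moreover have "k1 \<notin> K'" unfolding K'_def using \<open>k1 \<noteq> k0\<close> by auto
    moreover have "K' \<subseteq> {1..r}" unfolding K'_def using less.prems(1,3) by auto
    ultimately show ?thesis using less.hyps[OF lt k1r] by blast
  qed
qed

lemma indep_fin: "lpm_indep r P Q I \<Longrightarrow> finite I \<and> card I \<le> r"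
proof -
  assume "lpm_indep r P Q I"
  then obtain K f where K: "K \<subseteq> {1..r}" "bij_betw f K I" unfolding lpm_indep_def by blast
  then have "finite K" using finite_subset by blast
  then show ?thesis using K bij_betw_finite bij_betw_same_card card_mono[of "{1..r}" K] by fastforce
qed

lemma card_le_lemma: "{k\<in>{1..(r::nat)}. k \<le> h} \<subseteq> {1..h}" by auto

lemma bases_sub: "B \<in> lpm_bases r P Q \<Longrightarrow> B \<in> CF (height P) (height Q) (m+r) r"
proof -
  assume Bb: "B \<in> lpm_bases r P Q"
  then have ind: "lpm_indep r P Q B" and max: "\<And>I. lpm_indep r P Q I \<Longrightarrow> B \<subseteq> I \<Longrightarrow> I = B"
    unfolding lpm_bases_def by auto
  obtain K f where K: "K \<subseteq> {1..r}" and bij: "bij_betw f K B" and val: "\<forall>k\<in>K. f k \<in> lpm_interval P Q k"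
    using ind unfolding lpm_indep_def by blast
  have finB: "finite B" and cB: "card B \<le> r" using indep_fin[OF ind] by auto
  have finK: "finite K" using K finite_subset by blast
  have cK: "card K = card B" using bij bij_betw_same_card by blast
  have cBr: "card B = r"
  proof (rule ccontr)
    assume "card B \<noteq> r"
    then have "card K < card {1..r}" using cB cK by simp
    then obtain k0 where k0: "k0 \<in> {1..r}" "k0 \<notin> K"
      using card_mono[OF finK] by (metis finite_atLeastAtMost not_le subsetI)
    obtain e where "e \<notin> B" "lpm_indep r P Q (insert e B)" using aug[OF k0 K bij val] by blast
    then show False using max[of "insert e B"] by auto
  qed
  have KR: "K = {1..r}" using card_subset_eq[OF _ K] cK cBr by simp
  have Bsub: "B \<subseteq> {1..m+r}"
  proof
    fix b assume "b \<in> B"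
    then obtain k where "k \<in> K" "b = f k" using bij unfolding bij_betw_def by auto
    then show "b \<in> {1..m+r}" using val interval_sub K by blast
  qed
  have up: "cnt B t \<le> height Q t" for t
  proof -
    have "{b\<in>B. b \<le> t} \<subseteq> f ` {k\<in>{1..r}. k \<le> height Q t}"
    proof
      fix b assume "b \<in> {b\<in>B. b \<le> t}"
      then obtain k where k: "k \<in> K" "b = f k" "b \<le> t" using bij unfolding bij_betw_def by auto
      then have "north_pos Q k \<le> t" using val unfolding lpm_interval_def by fastforce
      then have "k \<le> height Q t" using NPQ k KR by auto
      then show "b \<in> f ` {k\<in>{1..r}. k \<le> height Q t}" using k KR by auto
    qed
    then have "cnt B t \<le> card (f ` {k\<in>{1..r}. k \<le> height Q t})"
      unfolding cnt_def by (intro card_mono) auto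
    also have "\<dots> \<le> card {k\<in>{1..r}. k \<le> height Q t}" by (rule card_image_le) auto
    also have "\<dots> \<le> card {1..height Q t}" by (intro card_mono) auto
    finally show ?thesis by simp
  qed
  have lo: "height P t \<le> cnt B t" for t
  proof -
    have "{b\<in>B. t < b} \<subseteq> f ` {height P t + 1..r}"
    proof
      fix b assume "b \<in> {b\<in>B. t < b}"
      then obtain k where k: "k \<in> K" "b = f k" "t < b" using bij unfolding bij_betw_def by auto
      then have "t < north_pos P k" using val unfolding lpm_interval_def by fastforce
      then have "\<not> k \<le> height P t" using NPP[of k t] k KR by auto
      then show "b \<in> f ` {height P t + 1..r}" using k KR by auto
    qed
    then have "card {b\<in>B. t < b} \<le> card (f ` {height P t + 1..r})"
      by (intro card_mono) auto
    also have "\<dots> \<le> card {height P t + 1..r}" by (rule card_image_le) auto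
    finally have "card {b\<in>B. t < b} \<le> r - height P t" by simp
    then show ?thesis using cnt_split[OF finB, of t] cBr height_le_r[OF lpP, of t] by linarith
  qed
  show ?thesis unfolding CF_def using Bsub cBr up lo by auto
qed

lemma CF_sub: "B \<in> CF (height P) (height Q) (m+r) r \<Longrightarrow> B \<in> lpm_bases r P Q"
proof -
  assume "B \<in> CF (height P) (height Q) (m+r) r"
  then have Bsub: "B \<subseteq> {1..m+r}" and cB: "card B = r" and bnd: "\<And>t. height P t \<le> cnt B t \<and> cnt B t \<le> height Q t"
    unfolding CF_def by auto
  have finB: "finite B" using Bsub finite_subset by blast
  define \<rho> where "\<rho> = cnt B"
  have inj: "inj_on \<rho> B"
  proof (rule inj_onI)
    have lt: "\<rho> b < \<rho> b'" if "b \<in> B" "b' \<in> B" "b < b'" for b b'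
    proof -
      have "b' \<notin> {s\<in>B. s \<le> b}" "b' \<in> {s\<in>B. s \<le> b'}" using that by auto
      moreover have "{s\<in>B. s \<le> b} \<subseteq> {s\<in>B. s \<le> b'}" using that by auto
      ultimately have "{s\<in>B. s \<le> b} \<subset> {s\<in>B. s \<le> b'}" by blast
      then show ?thesis unfolding \<rho>_def cnt_def using finB by (intro psubset_card_mono) auto
    qed
    fix b b' assume "b \<in> B" "b' \<in> B" "\<rho> b = \<rho> b'"
    then show "b = b'" using lt[of b b'] lt[of b' b] by (metis less_irrefl nat_neq_iff)
  qed
  have img: "\<rho> ` B \<subseteq> {1..r}"
  proof
    fix k assume "k \<in> \<rho> ` B"
    then obtain b where b: "b \<in> B" "k = \<rho> b" by auto
    have "{s\<in>B. s \<le> b} \<noteq> {}" using b by auto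
    then have "1 \<le> k" unfolding b \<rho>_def cnt_def using finB
      by (metis (no_types, lifting) One_nat_def Suc_leI card_gt_0_iff finite_subset mem_Collect_eq subsetI)
    moreover have "k \<le> r" using cnt_le_card[OF finB] cB b unfolding \<rho>_def by metis
    ultimately show "k \<in> {1..r}" by simp
  qed
  have img2: "\<rho> ` B = {1..r}"
    using card_subset_eq[OF _ img] card_image[OF inj] cB by simp
  have bij: "bij_betw \<rho> B {1..r}" using inj img2 unfolding bij_betw_def by simp
  define f where "f = the_inv_into B \<rho>"
  have bijf: "bij_betw f {1..r} B" unfolding f_def by (rule bij_betw_the_inv_into[OF bij])
  have val: "\<forall>k\<in>{1..r}. f k \<in> lpm_interval P Q k"
  proof
    fix k assume k: "k \<in> {1..r}"
    have fB: "f k \<in> B" using bijf k unfolding bij_betw_def by auto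
    have rk: "\<rho> (f k) = k" unfolding f_def using f_the_inv_into_f[OF inj] img2 k by simp
    have b1: "1 \<le> f k" using fB Bsub by auto
    have "k \<le> height Q (f k)" using bnd[of "f k"] rk unfolding \<rho>_def by simp
    then have q: "north_pos Q k \<le> f k" using NPQ k by auto
    have p: "f k \<le> north_pos P k"
    proof (rule ccontr)
      assume "\<not> f k \<le> north_pos P k"
      then have "north_pos P k \<le> f k - 1" by simp
      then have "k \<le> height P (f k - 1)" using NPP k by auto
      also have "\<dots> \<le> cnt B (f k - 1)" using bnd by simp
      also have "\<dots> = k - 1" using cnt_pred[OF finB fB b1] rk unfolding \<rho>_def by simp
      finally show False using k by (simp add: le_diff_conv2)
    qed
    show "f k \<in> lpm_interval P Q k" unfolding lpm_interval_def using p q by simp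
  qed
  have ind: "lpm_indep r P Q B"
    unfolding lpm_indep_def using bijf val by blast
  have "I = B" if "lpm_indep r P Q I" "B \<subseteq> I" for I
    using indep_fin[OF that(1)] that(2) cB card_subset_eq[of I B] card_mono[of I B] by (metis antisym card_mono)
  then show ?thesis unfolding lpm_bases_def using ind by auto
qed

lemma bases_eq: "lpm_bases r P Q = CF (height P) (height Q) (m+r) r"
  using bases_sub CF_sub by blast

end



lemma cnt_add: "finite S \<Longrightarrow> s \<le> t \<Longrightarrow> cnt S t = cnt S s + card {y\<in>S. s < y \<and> y \<le> t}"
proof -
  assume f: "finite S" and st: "s \<le> t"
  have "{y\<in>S. y \<le> t} = {y\<in>S. y \<le> s} \<union> {y\<in>S. s < y \<and> y \<le> t}" using st by auto
  moreover have "card ({y\<in>S. y \<le> s} \<union> {y\<in>S. s < y \<and> y \<le> t}) = card {y\<in>S. y \<le> s} + card {y\<in>S. s < y \<and> y \<le> t}"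
    using f by (intro card_Un_disjoint) auto
  ultimately show ?thesis unfolding cnt_def by simp
qed

lemma cnt_Un_disj: "finite S \<Longrightarrow> finite T \<Longrightarrow> S \<inter> T = {} \<Longrightarrow> cnt (S \<union> T) t = cnt S t + cnt T t"
proof -
  assume "finite S" "finite T" "S \<inter> T = {}"
  moreover have "{y\<in>S \<union> T. y \<le> t} = {y\<in>S. y \<le> t} \<union> {y\<in>T. y \<le> t}" by auto
  ultimately show ?thesis unfolding cnt_def by (simp add: card_Un_disjoint disjoint_iff)
qed

lemma d_step:
  assumes f1: "finite B1" and f2: "finite B2" and st: "s \<le> t"
  shows "(int (cnt B2 t) - int (cnt B1 t)) - (int (cnt B2 s) - int (cnt B1 s)) \<le> int (card {y\<in>B2 - B1. s < y \<and> y \<le> t})"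
proof -
  have "{y\<in>B2. s < y \<and> y \<le> t} \<subseteq> {y\<in>B2 - B1. s < y \<and> y \<le> t} \<union> {y\<in>B1. s < y \<and> y \<le> t}" by auto
  then have "card {y\<in>B2. s < y \<and> y \<le> t} \<le> card ({y\<in>B2 - B1. s < y \<and> y \<le> t} \<union> {y\<in>B1. s < y \<and> y \<le> t})"
    using f1 f2 by (intro card_mono) auto
  also have "\<dots> \<le> card {y\<in>B2 - B1. s < y \<and> y \<le> t} + card {y\<in>B1. s < y \<and> y \<le> t}" by (rule card_Un_le)
  finally show ?thesis using cnt_add[OF f1 st] cnt_add[OF f2 st] by linarith
qed

lemma cnt_swap:
  assumes f: "finite B1" and x: "x \<in> B1" and y: "y \<notin> B1"
  shows "int (cnt (insert y (B1 - {x})) t) = int (cnt B1 t) - (if x \<le> t then 1 else 0) + (if y \<le> t then 1 else 0)"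
proof -
  have fin: "finite {s\<in>B1. s \<le> t}" using f by auto
  have e: "{s\<in>insert y (B1 - {x}). s \<le> t} = (if y \<le> t then insert y else id) ({s\<in>B1. s \<le> t} - {x})" by auto
  have c1: "card ({s\<in>B1. s \<le> t} - {x}) = card {s\<in>B1. s \<le> t} - (if x \<le> t then 1 else 0)"
    using x fin by (auto simp: card_Diff_singleton_if)
  have c0: "x \<le> t \<Longrightarrow> 1 \<le> card {s\<in>B1. s \<le> t}" using x fin
    by (metis (mono_tags, lifting) One_nat_def Suc_leI card_gt_0_iff empty_iff mem_Collect_eq)
  show ?thesis
    unfolding cnt_def e using c1 c0 y fin by (auto simp: card_insert_disjoint)
qed

lemma CF_matroid:
  assumes ne: "CF lo hi n r \<noteq> {}"
  shows "matroid_bases {1..n} (CF lo hi n r)"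
  unfolding matroid_bases_def
proof (intro conjI ballI)
  show "CF lo hi n r \<noteq> {}" by (rule ne)
  fix B assume "B \<in> CF lo hi n r" then show "B \<subseteq> {1..n}" unfolding CF_def by auto
next
  fix B1 B2 x assume B1: "B1 \<in> CF lo hi n r" and B2: "B2 \<in> CF lo hi n r" and x: "x \<in> B1 - B2"
  have s1: "B1 \<subseteq> {1..n}" and c1: "card B1 = r" and b1: "\<And>t. lo t \<le> cnt B1 t \<and> cnt B1 t \<le> hi t"
    using B1 unfolding CF_def by auto
  have s2: "B2 \<subseteq> {1..n}" and c2: "card B2 = r" and b2: "\<And>t. lo t \<le> cnt B2 t \<and> cnt B2 t \<le> hi t"
    using B2 unfolding CF_def by auto
  have f1: "finite B1" using s1 finite_subset by blast
  have f2: "finite B2" using s2 finite_subset by blast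
  define d where "d t = int (cnt B2 t) - int (cnt B1 t)" for t
  have dstep: "s \<le> t \<Longrightarrow> d t - d s \<le> int (card {y\<in>B2 - B1. s < y \<and> y \<le> t})" for s t
    unfolding d_def by (rule d_step[OF f1 f2])
  have x1: "1 \<le> x" and xn: "x \<le> n" using x s1 by auto
  have "0 \<notin> B1" "0 \<notin> B2" using s1 s2 by auto
  then have d0: "d 0 = 0" unfolding d_def using cnt_zero[of B1] cnt_zero[of B2] by simp
  have "B1 \<subseteq> {..n}" "B2 \<subseteq> {..n}" using s1 s2 by auto
  then have dn: "d n = 0" unfolding d_def using cnt_full[OF f1, of n n] cnt_full[OF f2, of n n] s1 s2 c1 c2 by auto
  have dx: "d x = d (x - 1) - 1"
    using cnt_Suc[OF f1, of "x - 1"] cnt_Suc[OF f2, of "x - 1"] x x1 unfolding d_def by simp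
  define good where "good y = (y \<in> B2 - B1 \<and> insert y (B1 - {x}) \<in> CF lo hi n r)" for y
  have mk: "good y" if y: "y \<in> B2 - B1"
    and ok: "\<And>t. lo t \<le> int (cnt B1 t) - (if x \<le> t then 1 else 0) + (if y \<le> t then 1 else 0)
              \<and> int (cnt B1 t) - (if x \<le> t then 1 else 0) + (if y \<le> t then 1 else 0) \<le> hi t" for y
  proof -
    let ?B = "insert y (B1 - {x})"
    have "?B \<subseteq> {1..n}" using s1 s2 y by auto
    moreover have "card ?B = r"
    proof -
      have "0 < r" using c1 f1 x card_gt_0_iff[of B1] by auto
      then show ?thesis using c1 f1 x y by (simp add: card_insert_disjoint card_Diff_singleton)
    qed
    moreover have "lo t \<le> cnt ?B t \<and> cnt ?B t \<le> hi t" for t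
      using ok[of t] cnt_swap[OF f1, of x y t] x y by simp
    ultimately show ?thesis unfolding good_def CF_def using y by auto
  qed
  show "\<exists>y\<in>B2 - B1. insert y (B1 - {x}) \<in> CF lo hi n r"
  proof (cases "d (x - 1) \<le> 0")
    case True
    define Y where "Y = {y\<in>B2 - B1. x < y}"
    have finY: "finite Y" unfolding Y_def using f2 by auto
    have "Y \<noteq> {}"
    proof
      assume "Y = {}"
      then have "{y\<in>B2 - B1. x < y \<and> y \<le> n} = {}" unfolding Y_def by auto
      then have "int (card {y\<in>B2 - B1. x < y \<and> y \<le> n}) = 0" by (simp only: card.empty of_nat_0)
      then show False using dstep[OF xn] dn dx True by linarith
    qed
    define y where "y = Min Y"
    have yY: "y \<in> Y" unfolding y_def using finY \<open>Y \<noteq> {}\<close> by simp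
    have ymin: "\<And>z. z \<in> Y \<Longrightarrow> y \<le> z" unfolding y_def using finY by simp
    have mid: "d t \<le> -1" if "x \<le> t" "t < y" for t
    proof -
      have "{z\<in>B2 - B1. x < z \<and> z \<le> t} = {}" using ymin that unfolding Y_def by fastforce
      then have "int (card {z\<in>B2 - B1. x < z \<and> z \<le> t}) = 0" by (simp only: card.empty of_nat_0)
      then show ?thesis using dstep[OF that(1)] dx True by linarith
    qed
    have "good y"
    proof (rule mk)
      show "y \<in> B2 - B1" using yY unfolding Y_def by auto
      fix t
      show "lo t \<le> int (cnt B1 t) - (if x \<le> t then 1 else 0) + (if y \<le> t then 1 else 0)
              \<and> int (cnt B1 t) - (if x \<le> t then 1 else 0) + (if y \<le> t then 1 else 0) \<le> hi t"
      proof (cases "x \<le> t \<and> t < y")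
        case True
        then show ?thesis using mid[of t] b1[of t] b2[of t] unfolding d_def by auto
      next
        case False
        have "x < y" using yY unfolding Y_def by auto
        then show ?thesis using False b1[of t] by auto
      qed
    qed
    then show ?thesis unfolding good_def by blast
  next
    case False
    define Y where "Y = {y\<in>B2 - B1. y < x}"
    have finY: "finite Y" unfolding Y_def using f2 by auto
    have "Y \<noteq> {}"
    proof
      assume "Y = {}"
      then have "{y\<in>B2 - B1. 0 < y \<and> y \<le> x - 1} = {}" unfolding Y_def using x1 by auto
      then have "int (card {y\<in>B2 - B1. 0 < y \<and> y \<le> x - 1}) = 0" by (simp only: card.empty of_nat_0)
      then show False using dstep[of 0 "x - 1"] d0 False by linarith
    qed
    define y where "y = Max Y"
    have yY: "y \<in> Y" unfolding y_def using finY \<open>Y \<noteq> {}\<close> by simp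
    have ymax: "\<And>z. z \<in> Y \<Longrightarrow> z \<le> y" unfolding y_def using finY by simp
    have mid: "d t \<ge> 1" if "y \<le> t" "t < x" for t
    proof -
      have "{z\<in>B2 - B1. t < z \<and> z \<le> x - 1} = {}" using ymax that unfolding Y_def by fastforce
      then have "int (card {z\<in>B2 - B1. t < z \<and> z \<le> x - 1}) = 0" by (simp only: card.empty of_nat_0)
      then show ?thesis using dstep[of t "x - 1"] that False by linarith
    qed
    have "good y"
    proof (rule mk)
      show "y \<in> B2 - B1" using yY unfolding Y_def by auto
      fix t
      show "lo t \<le> int (cnt B1 t) - (if x \<le> t then 1 else 0) + (if y \<le> t then 1 else 0)
              \<and> int (cnt B1 t) - (if x \<le> t then 1 else 0) + (if y \<le> t then 1 else 0) \<le> hi t"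
      proof (cases "y \<le> t \<and> t < x")
        case True
        then show ?thesis using mid[of t] b1[of t] b2[of t] unfolding d_def by auto
      next
        case False
        have "y < x" using yY unfolding Y_def by auto
        then show ?thesis using False b1[of t] by auto
      qed
    qed
    then show ?thesis unfolding good_def by blast
  qed
qed

lemma odd_even_cnt:
  assumes f: "finite D" and z: "0 \<notin> D"
  shows "cnt {d\<in>D. odd (cnt D d)} t = (cnt D t + 1) div 2 \<and> cnt {d\<in>D. even (cnt D d)} t = cnt D t div 2"
proof (induction t)
  case 0
  have "0 \<notin> {d\<in>D. odd (cnt D d)}" "0 \<notin> {d\<in>D. even (cnt D d)}" using z by auto
  then show ?case using cnt_zero[OF z] cnt_zero by simp
next
  case (Suc t)
  have fo: "finite {d\<in>D. odd (cnt D d)}" and fe: "finite {d\<in>D. even (cnt D d)}" using f by auto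
  have cs: "cnt D (Suc t) = cnt D t + (if Suc t \<in> D then 1 else 0)" by (rule cnt_Suc[OF f])
  show ?case
  proof (cases "Suc t \<in> D")
    case True
    then show ?thesis using Suc cnt_Suc[OF fo, of t] cnt_Suc[OF fe, of t] cs by auto
  next
    case False
    then show ?thesis using Suc cnt_Suc[OF fo, of t] cnt_Suc[OF fe, of t] cs by auto
  qed
qed

lemma CF_balance:
  assumes B: "B \<in> CF lo hi n r" and B': "B' \<in> CF lo hi n r"
  shows "\<exists>B1\<in>CF lo hi n r. \<exists>B2\<in>CF lo hi n r.
           indicator_vec B + indicator_vec B' = indicator_vec B1 + indicator_vec B2 \<and>
           (\<forall>t. cnt B1 t + cnt B2 t = cnt B t + cnt B' t \<and> cnt B2 t \<le> cnt B1 t \<and> cnt B1 t \<le> cnt B2 t + 1)"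
proof -
  have s: "B \<subseteq> {1..n}" and c: "card B = r" and b: "\<And>t. lo t \<le> cnt B t \<and> cnt B t \<le> hi t"
    using B unfolding CF_def by auto
  have s': "B' \<subseteq> {1..n}" and c': "card B' = r" and b': "\<And>t. lo t \<le> cnt B' t \<and> cnt B' t \<le> hi t"
    using B' unfolding CF_def by auto
  have f: "finite B" "finite B'" using s s' finite_subset by blast+
  define C where "C = B \<inter> B'"
  define D where "D = (B - B') \<union> (B' - B)"
  define Do where "Do = {d\<in>D. odd (cnt D d)}"
  define De where "De = {d\<in>D. even (cnt D d)}"
  define B1 where "B1 = C \<union> Do"
  define B2 where "B2 = C \<union> De"
  have fD: "finite D" "finite C" "finite (B - B')" "finite (B' - B)" unfolding D_def C_def using f by auto
  have z: "0 \<notin> D" unfolding D_def using s s' by auto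
  have fO: "finite Do" "finite De" unfolding Do_def De_def using fD by auto
  have oe: "cnt Do t = (cnt D t + 1) div 2" "cnt De t = cnt D t div 2" for t
    using odd_even_cnt[OF fD(1) z, of t] unfolding Do_def De_def by auto
  have cB: "cnt B t = cnt C t + cnt (B - B') t" for t
    using cnt_Un_disj[OF fD(2) fD(3), of t] unfolding C_def by (metis Int_Diff_disjoint Int_Diff_Un)
  have cB': "cnt B' t = cnt C t + cnt (B' - B) t" for t
  proof -
    have "B' = C \<union> (B' - B)" "C \<inter> (B' - B) = {}" unfolding C_def by auto
    then show ?thesis using cnt_Un_disj[OF fD(2) fD(4), of t] by metis
  qed
  have cD: "cnt D t = cnt (B - B') t + cnt (B' - B) t" for t
    unfolding D_def using cnt_Un_disj[OF fD(3) fD(4), of t] by auto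
  have c1: "cnt B1 t = cnt C t + (cnt D t + 1) div 2" for t
    unfolding B1_def using cnt_Un_disj[OF fD(2) fO(1), of t] oe unfolding Do_def D_def C_def by auto
  have c2: "cnt B2 t = cnt C t + cnt D t div 2" for t
    unfolding B2_def using cnt_Un_disj[OF fD(2) fO(2), of t] oe unfolding De_def D_def C_def by auto
  have sub1: "B1 \<subseteq> {1..n}" "B2 \<subseteq> {1..n}" unfolding B1_def B2_def C_def Do_def De_def D_def using s s' by auto
  have f12: "finite B1" "finite B2" using sub1 finite_subset by blast+
  have eqn: "card (B - B') = card (B' - B)"
    using c c' f card_Diff_subset_Int[of B' B] card_Diff_subset_Int[of B B'] by (simp add: Int_commute)
  have "B - B' \<subseteq> {..n}" "B' - B \<subseteq> {..n}" "B \<subseteq> {..n}" "B' \<subseteq> {..n}"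
     "B1 \<subseteq> {..n}" "B2 \<subseteq> {..n}" using s s' sub1 by auto
  note subs = this
  have atn: "cnt (B - B') n = card (B - B')" "cnt (B' - B) n = card (B' - B)"
    using cnt_full[OF fD(3), of n n] cnt_full[OF fD(4), of n n] subs by auto
  have cardC: "cnt B n = r" "cnt B' n = r" using cnt_full[OF f(1), of n n] cnt_full[OF f(2), of n n] subs c c' by auto
  have bnd: "lo t \<le> cnt Bi t \<and> cnt Bi t \<le> hi t" if "Bi \<in> {B1, B2}" for Bi t
  proof -
    have "lo t \<le> cnt C t + cnt (B - B') t" "lo t \<le> cnt C t + cnt (B' - B) t"
         "cnt C t + cnt (B - B') t \<le> hi t" "cnt C t + cnt (B' - B) t \<le> hi t"
      using b[of t] b'[of t] cB[of t] cB'[of t] by auto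
    then show ?thesis using that c1[of t] c2[of t] cD[of t] by auto
  qed
  have card12: "card B1 = r" "card B2 = r"
  proof -
    have "card B1 = cnt B1 n" "card B2 = cnt B2 n" using cnt_full[OF f12(1), of n n] cnt_full[OF f12(2), of n n] subs by auto
    then show "card B1 = r" "card B2 = r" using c1[of n] c2[of n] cD[of n] atn eqn cB[of n] cardC by auto
  qed
  have in12: "B1 \<in> CF lo hi n r" "B2 \<in> CF lo hi n r" unfolding CF_def using sub1 card12 bnd by auto
  have ind: "indicator_vec B + indicator_vec B' = indicator_vec B1 + indicator_vec B2"
  proof
    fix i
    show "(indicator_vec B + indicator_vec B') i = (indicator_vec B1 + indicator_vec B2) i"
      unfolding indicator_vec_def B1_def B2_def Do_def De_def C_def D_def by auto
  qed
  have "\<forall>t. cnt B1 t + cnt B2 t = cnt B t + cnt B' t \<and> cnt B2 t \<le> cnt B1 t \<and> cnt B1 t \<le> cnt B2 t + 1"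
    using c1 c2 cB cB' cD by auto
  then show ?thesis using in12 ind by blast
qed




lemma ind_inj: "inj indicator_vec"
proof (rule injI)
  fix A B assume "indicator_vec A = indicator_vec B"
  then have "\<And>i. (i \<in> A) = (i \<in> B)" unfolding indicator_vec_def
    by (metis one_neq_zero)
  then show "A = B" by blast
qed

lemma cont_coord: "continuous_on S (\<lambda>l::nat set \<Rightarrow> real. l B)"
  by (rule continuous_on_subset[OF continuous_on_product_coordinates]) simp

lemma int_ineq:
  fixes a c j k1 k2 :: int
  shows "a < j \<Longrightarrow> j < c \<Longrightarrow> k1 + k2 = a + c \<Longrightarrow> \<bar>k1 - k2\<bar> \<le> 1 \<Longrightarrow>
    max 0 (j - k1) + max 0 (j - k2) < max 0 (j - a) + max 0 (j - c)"
  by (cases "k1 \<le> j"; cases "k2 \<le> j") (simp_all add: max_def abs_if)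

lemma sum_pert:
  fixes l :: "nat set \<Rightarrow> real"
  assumes fin: "finite S" and mem: "B1 \<in> S" "B2 \<in> S" "B \<in> S" "B' \<in> S"
  shows "(\<Sum>C\<in>S. (l C + \<nu> * ((if C = B1 then 1 else 0) + (if C = B2 then 1 else 0)
            - (if C = B then 1 else 0) - (if C = B' then 1 else 0))) * g C)
         = (\<Sum>C\<in>S. l C * g C) + \<nu> * (g B1 + g B2 - g B - g B')"
proof -
  have "(\<Sum>C\<in>S. (l C + \<nu> * ((if C = B1 then 1 else 0) + (if C = B2 then 1 else 0)
            - (if C = B then 1 else 0) - (if C = B' then 1 else 0))) * g C)
       = (\<Sum>C\<in>S. l C * g C + \<nu> * (if C = B1 then g C else 0) + \<nu> * (if C = B2 then g C else 0)
            - \<nu> * (if C = B then g C else 0) - \<nu> * (if C = B' then g C else 0))"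
    by (rule sum.cong) (auto simp: algebra_simps)
  also have "\<dots> = (\<Sum>C\<in>S. l C * g C) + \<nu> * (\<Sum>C\<in>S. (if C = B1 then g C else 0)) + \<nu> * (\<Sum>C\<in>S. (if C = B2 then g C else 0))
            - \<nu> * (\<Sum>C\<in>S. (if C = B then g C else 0)) - \<nu> * (\<Sum>C\<in>S. (if C = B' then g C else 0))"
    by (simp only: sum.distrib sum_subtractf sum_distrib_left)
  also have "\<dots> = (\<Sum>C\<in>S. l C * g C) + \<nu> * (g B1 + g B2 - g B - g B')"
    using fin mem by (simp add: sum.delta algebra_simps)
  finally show ?thesis .
qed

lemma hull_split:
  fixes \<B> :: "nat set set" and k :: "nat set \<Rightarrow> int" and lin :: "(nat \<Rightarrow> real) \<Rightarrow> real" and j :: int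
  assumes fin: "finite \<B>"
  and bal: "\<And>B B'. B\<in>\<B> \<Longrightarrow> B'\<in>\<B> \<Longrightarrow> \<exists>B1\<in>\<B>. \<exists>B2\<in>\<B>.
        indicator_vec B + indicator_vec B' = indicator_vec B1 + indicator_vec B2 \<and>
        k B1 + k B2 = k B + k B' \<and> \<bar>k B1 - k B2\<bar> \<le> 1"
  and lin: "\<And>l. lin (\<Sum>B\<in>\<B>. l B *\<^sub>R indicator_vec B) = (\<Sum>B\<in>\<B>. l B * of_int (k B))"
  and p: "p \<in> base_polytope \<B>" and pj: "lin p \<ge> of_int j"
  shows "p \<in> base_polytope {B\<in>\<B>. k B \<ge> j}"
proof -
  let ?ind = indicator_vec
  have fi: "finite (?ind ` \<B>)" using fin by simp
  obtain u where u0: "\<forall>x\<in>?ind ` \<B>. 0 \<le> u x" and u1: "sum u (?ind ` \<B>) = 1"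
    and up: "(\<Sum>x\<in>?ind ` \<B>. u x *\<^sub>R x) = p"
    using p unfolding base_polytope_def convex_hull_finite[OF fi] by blast
  have injB: "inj_on ?ind \<B>" using ind_inj by (simp add: inj_on_def inj_def)
  define l0 where "l0 B = (if B \<in> \<B> then u (?ind B) else 0)" for B
  have rep: "(\<Sum>B\<in>\<B>. l B *\<^sub>R ?ind B) = p" if "\<forall>i. (\<Sum>B\<in>\<B>. l B * ?ind B i) = p i" for l
  proof
    fix i show "(\<Sum>B\<in>\<B>. l B *\<^sub>R ?ind B) i = p i" using that by (simp add: sum_fun_apply scaleR_fun_def)
  qed
  define W where "W = {l :: nat set \<Rightarrow> real. (\<forall>B. l B \<in> {0..1}) \<and> (\<forall>B. (if B \<in> \<B> then 0 else l B) = 0)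
      \<and> sum l \<B> = 1 \<and> (\<forall>i. (\<Sum>B\<in>\<B>. l B * ?ind B i) = p i)}"
  have l0W: "l0 \<in> W"
  proof -
    have s1: "sum l0 \<B> = 1" using u1 sum.reindex[OF injB, of u] unfolding l0_def by simp
    have nn: "\<And>B. 0 \<le> l0 B" using u0 unfolding l0_def by auto
    have le1: "l0 B \<le> 1" for B
    proof (cases "B \<in> \<B>")
      case True then show ?thesis using member_le_sum[of B \<B> l0] nn fin s1 by auto
    next
      case False then show ?thesis unfolding l0_def by simp
    qed
    have "(\<Sum>B\<in>\<B>. l0 B *\<^sub>R ?ind B) = p"
      using up sum.reindex[OF injB, of "\<lambda>x. u x *\<^sub>R x"] unfolding l0_def by simp
    then have "(\<Sum>B\<in>\<B>. l0 B * ?ind B i) = p i" for i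
      using fun_cong[OF \<open>(\<Sum>B\<in>\<B>. l0 B *\<^sub>R ?ind B) = p\<close>, of i] unfolding sum_fun_apply scaleR_fun_def by simp
    then show ?thesis unfolding W_def using s1 nn le1 by (auto simp: l0_def)
  qed
  have compW: "compact W"
  proof -
    have c0: "compact (PiE UNIV (\<lambda>_::nat set. {0..1::real}))"
      by (metis compactin_PiE compact_Icc compactin_euclidean_iff euclidean_product_topology)
    have cc: "continuous_on UNIV (\<lambda>x::nat set \<Rightarrow> real. if B \<in> \<B> then 0 else x B)" for B
      by (cases "B \<in> \<B>") (auto simp: cont_coord)
    have cl1: "closed {l :: nat set \<Rightarrow> real. \<forall>B. (if B \<in> \<B> then 0 else l B) = 0}"
      by (intro closed_Collect_all closed_Collect_eq cc continuous_on_const)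
    have cl2: "closed {l :: nat set \<Rightarrow> real. sum l \<B> = 1}"
      by (intro closed_Collect_eq) (auto intro!: continuous_intros cont_coord)
    have cl3: "closed {l :: nat set \<Rightarrow> real. \<forall>i. (\<Sum>B\<in>\<B>. l B * ?ind B i) = p i}"
      by (intro closed_Collect_all closed_Collect_eq) (auto intro!: continuous_intros cont_coord)
    have "W = PiE UNIV (\<lambda>_::nat set. {0..1::real}) \<inter> {l. \<forall>B. (if B \<in> \<B> then 0 else l B) = 0}
        \<inter> {l. sum l \<B> = 1} \<inter> {l. \<forall>i. (\<Sum>B\<in>\<B>. l B * ?ind B i) = p i}"
      unfolding W_def by (auto simp: PiE_def extensional_def)
    then show ?thesis using compact_Int_closed[OF compact_Int_closed[OF compact_Int_closed[OF c0 cl1] cl2] cl3] by simp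
  qed
  define \<psi> where "\<psi> B = real_of_int (max 0 (j - k B))" for B
  define \<Psi> where "\<Psi> l = (\<Sum>B\<in>\<B>. l B * \<psi> B)" for l :: "nat set \<Rightarrow> real"
  have "continuous_on W \<Psi>" unfolding \<Psi>_def by (auto intro!: continuous_intros cont_coord)
  then obtain l where lW: "l \<in> W" and lmin: "\<And>l'. l' \<in> W \<Longrightarrow> \<Psi> l \<le> \<Psi> l'"
    using continuous_attains_inf[OF compW] l0W by blast
  have lW': "(\<forall>B. l B \<in> {0..1}) \<and> (\<forall>B. (if B \<in> \<B> then 0 else l B) = 0)
      \<and> sum l \<B> = 1 \<and> (\<forall>i. (\<Sum>B\<in>\<B>. l B * ?ind B i) = p i)" using lW unfolding W_def by blast
  have lnn: "\<And>B. 0 \<le> l B" and ls: "sum l \<B> = 1"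
    and lrep: "\<And>i. (\<Sum>B\<in>\<B>. l B * ?ind B i) = p i"
    using lW' by auto
  have lout: "\<And>B. B \<notin> \<B> \<Longrightarrow> l B = 0"
  proof -
    fix B assume "B \<notin> \<B>"
    then show "l B = 0" using lW' by (metis (full_types))
  qed
  have lp: "(\<Sum>B\<in>\<B>. l B *\<^sub>R ?ind B) = p" using rep lrep by blast
  have lk: "(\<Sum>B\<in>\<B>. l B * of_int (k B)) \<ge> of_int j" using lin[of l] lp pj by simp
  have zero: "l B = 0" if B: "B \<in> \<B>" "k B < j" for B
  proof (rule ccontr)
    assume "l B \<noteq> 0"
    then have lB: "l B > 0" using lnn[of B] by simp
    obtain B' where B': "B' \<in> \<B>" "l B' > 0" "k B' > j"
    proof (rule ccontr)
      assume "\<not> thesis"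
      then have nb: "\<And>C. C \<in> \<B> \<Longrightarrow> l C > 0 \<Longrightarrow> k C \<le> j" using that by force
      have "l B * of_int (j - k B) \<le> (\<Sum>C\<in>\<B>. l C * of_int (j - k C))"
      proof (rule member_le_sum[OF B(1) _ fin])
        fix C assume C: "C \<in> \<B> - {B}"
        show "0 \<le> l C * of_int (j - k C)"
        proof (cases "l C > 0")
          case True then show ?thesis using nb[of C] C by simp
        next
          case False then have "l C = 0" using lnn[of C] by simp
          then show ?thesis by simp
        qed
      qed
      moreover have "l B * of_int (j - k B) > 0" using lB B(2) by simp
      moreover have "(\<Sum>C\<in>\<B>. l C * of_int (j - k C)) = of_int j * sum l \<B> - (\<Sum>C\<in>\<B>. l C * of_int (k C))"
        by (simp add: algebra_simps sum_subtractf sum_distrib_left)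
      ultimately show False using lk ls by simp
    qed
    obtain B1 B2 where B12: "B1 \<in> \<B>" "B2 \<in> \<B>"
      and iv: "?ind B + ?ind B' = ?ind B1 + ?ind B2"
      and ks: "k B1 + k B2 = k B + k B'" and kd: "\<bar>k B1 - k B2\<bar> \<le> 1"
      using bal[OF B(1) B'(1)] by blast
    have neq: "B1 \<noteq> B" "B1 \<noteq> B'" "B2 \<noteq> B" "B2 \<noteq> B'" "B \<noteq> B'"
      using ks kd B(2) B'(3) by (auto simp: abs_if split: if_splits)
    define \<nu> where "\<nu> = min (l B) (l B')"
    have \<nu>: "\<nu> > 0" "\<nu> \<le> l B" "\<nu> \<le> l B'" unfolding \<nu>_def using lB B'(2) by auto
    define l' where "l' C = l C + \<nu> * ((if C = B1 then 1 else 0) + (if C = B2 then 1 else 0)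
            - (if C = B then 1 else 0) - (if C = B' then 1 else 0))" for C
    have SP: "(\<Sum>C\<in>\<B>. l' C * g C) = (\<Sum>C\<in>\<B>. l C * g C) + \<nu> * (g B1 + g B2 - g B - g B')" for g
      unfolding l'_def by (rule sum_pert[OF fin B12 B(1) B'(1)])
    have l'nn: "0 \<le> l' C" for C
      unfolding l'_def using neq \<nu> lnn[of C] by auto
    have l'out: "l' C = 0" if "C \<notin> \<B>" for C
      unfolding l'_def using that B12 B(1) B'(1) lout[OF that] by auto
    have l's: "sum l' \<B> = 1" using SP[of "\<lambda>_. 1"] ls by simp
    have l'1: "l' C \<le> 1" for C
    proof (cases "C \<in> \<B>")
      case True then show ?thesis using member_le_sum[of C \<B> l'] l'nn fin l's by auto
    next
      case False then show ?thesis using l'out by simp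
    qed
    have l'rep: "(\<Sum>C\<in>\<B>. l' C * ?ind C i) = p i" for i
    proof -
      have "?ind B1 i + ?ind B2 i - ?ind B i - ?ind B' i = 0"
        using fun_cong[OF iv, of i] by simp
      then show ?thesis using SP[of "\<lambda>C. ?ind C i"] lrep[of i] by simp
    qed
    have l'W: "l' \<in> W" unfolding W_def using l'nn l'1 l'out l's l'rep by auto
    have "max 0 (j - k B1) + max 0 (j - k B2) < max 0 (j - k B) + max 0 (j - k B')"
      by (rule int_ineq[OF B(2) B'(3) ks kd])
    then have "\<psi> B1 + \<psi> B2 - \<psi> B - \<psi> B' < 0" unfolding \<psi>_def by linarith
    then have "\<Psi> l' < \<Psi> l" unfolding \<Psi>_def using SP[of \<psi>] \<nu>(1)
      by (simp add: mult_pos_neg)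
    then show False using lmin[OF l'W] by simp
  qed
  let ?B1 = "{B\<in>\<B>. k B \<ge> j}"
  have fin1: "finite ?B1" using fin by simp
  have "(\<Sum>B\<in>\<B>. l B *\<^sub>R ?ind B) = (\<Sum>B\<in>?B1. l B *\<^sub>R ?ind B)"
    using zero fin by (intro sum.mono_neutral_right) auto
  moreover have "sum l ?B1 = 1"
  proof -
    have "\<forall>i\<in>\<B> - ?B1. l i = 0" using zero not_less by blast
    then show ?thesis using fin ls sum.mono_neutral_right[of \<B> ?B1 l] by auto
  qed
  moreover have "(\<Sum>B\<in>?B1. l B *\<^sub>R ?ind B) \<in> convex hull (?ind ` ?B1)"
    using calculation(2) lnn by (intro convex_sum fin1 convex_convex_hull) (auto intro: hull_inc)
  ultimately show ?thesis unfolding base_polytope_def using lp by simp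
qed




definition L :: "nat \<Rightarrow> (nat \<Rightarrow> real) \<Rightarrow> real" where "L x p = (\<Sum>i\<in>{..x}. p i)"

lemma L_comb: "L x (a *\<^sub>R p + b *\<^sub>R q) = a * L x p + b * L x q"
  unfolding L_def by (simp add: scaleR_fun_def sum.distrib sum_distrib_left)

lemma L_ind: "L x (indicator_vec B) = real (cnt B x)"
proof -
  have "L x (indicator_vec B) = (\<Sum>i\<in>{..x}. if i \<in> B then 1 else 0)"
    unfolding L_def indicator_vec_def by simp
  also have "\<dots> = sum (\<lambda>_. 1) {i\<in>{..x}. i \<in> B}"
    by (rule sum.inter_filter[symmetric]) simp
  also have "{i\<in>{..x}. i \<in> B} = {s\<in>B. s \<le> x}" by auto
  finally show ?thesis unfolding cnt_def by simp
qed

lemma L_sum: "finite S \<Longrightarrow> L x (\<Sum>B\<in>S. l B *\<^sub>R indicator_vec B) = (\<Sum>B\<in>S. l B * real (cnt B x))"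
proof -
  assume f: "finite S"
  have "L x (\<Sum>B\<in>S. l B *\<^sub>R indicator_vec B) = (\<Sum>i\<in>{..x}. \<Sum>B\<in>S. l B * indicator_vec B i)"
    unfolding L_def by (simp add: sum_fun_apply scaleR_fun_def)
  also have "\<dots> = (\<Sum>B\<in>S. \<Sum>i\<in>{..x}. l B * indicator_vec B i)" by (rule sum.swap)
  also have "\<dots> = (\<Sum>B\<in>S. l B * L x (indicator_vec B))" unfolding L_def by (simp add: sum_distrib_left)
  finally show ?thesis by (simp add: L_ind)
qed

lemma conv_ge: "convex {p. c \<le> L x p}"
  unfolding convex_def
proof (intro ballI allI impI, simp only: mem_Collect_eq L_comb)
  fix a b u v assume a: "c \<le> L x a" and b: "c \<le> L x b" and uv: "0 \<le> (u::real)" "0 \<le> v" "u + v = 1"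
  have "u * c \<le> u * L x a" "v * c \<le> v * L x b" using a b uv by (simp_all add: mult_left_mono)
  moreover have "u * c + v * c = c" using uv(3) by (metis distrib_right mult_1)
  ultimately show "c \<le> u * L x a + v * L x b" by linarith
qed

lemma conv_le: "convex {p. L x p \<le> c}"
  unfolding convex_def
proof (intro ballI allI impI, simp only: mem_Collect_eq L_comb)
  fix a b u v assume a: "L x a \<le> c" and b: "L x b \<le> c" and uv: "0 \<le> (u::real)" "0 \<le> v" "u + v = 1"
  have "u * L x a \<le> u * c" "v * L x b \<le> v * c" using a b uv by (simp_all add: mult_left_mono)
  moreover have "u * c + v * c = c" using uv(3) by (metis distrib_right mult_1)
  ultimately show "u * L x a + v * L x b \<le> c" by linarith
qed

lemma face_gen:
  assumes cS: "convex S" and ge: "\<And>p. p \<in> S \<Longrightarrow> s * c \<le> s * L x p" and s: "s = 1 \<or> s = -1"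
  shows "(S \<inter> {p. L x p = c}) face_of S"
  unfolding face_of_def
proof (intro conjI ballI impI)
  show "S \<inter> {p. L x p = c} \<subseteq> S" by auto
  have "{p. L x p = c} = {p. c \<le> L x p} \<inter> {p. L x p \<le> c}" by auto
  then show "convex (S \<inter> {p. L x p = c})" using cS conv_ge conv_le by (metis convex_Int)
  fix a b y assume a: "a \<in> S" and b: "b \<in> S" and y: "y \<in> S \<inter> {p. L x p = c}" and seg: "y \<in> open_segment a b"
  obtain u where u: "0 < u" "u < 1" "y = (1 - u) *\<^sub>R a + u *\<^sub>R b" using seg by (auto simp: in_segment)
  have Ly: "(1 - u) * L x a + u * L x b = c" using y u(3) L_comb by auto
  have ha: "0 \<le> s * (L x a - c)" "0 \<le> s * (L x b - c)" using ge[OF a] ge[OF b] by (simp_all add: algebra_simps)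
  have "(1 - u) * (s * (L x a - c)) + u * (s * (L x b - c)) = s * ((1 - u) * L x a + u * L x b - c)"
    by (simp add: algebra_simps)
  also have "\<dots> = 0" using Ly by simp
  finally have z: "(1 - u) * (s * (L x a - c)) + u * (s * (L x b - c)) = 0" .
  have "0 \<le> (1 - u) * (s * (L x a - c))" "0 \<le> u * (s * (L x b - c))" using ha u by simp_all
  then have "(1 - u) * (s * (L x a - c)) = 0" "u * (s * (L x b - c)) = 0" using z by linarith+
  then have "L x a = c" "L x b = c" using u s by auto
  then show "a \<in> S \<inter> {p. L x p = c}" "b \<in> S \<inter> {p. L x p = c}" using a b by auto
qed




theorem corollary4:
  fixes m r :: nat and P Q :: "bool list" and x j :: nat
  assumes "lattice_path m r P" and "lattice_path m r Q" and "never_above P Q"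
    and "1 \<le> j" and "j \<le> r - 1"
    and "north_pos Q j < x" and "x < north_pos P j"
    and "north_pos Q (j + 1) < x + 1" and "x + 1 < north_pos P (j + 1)"
  shows "has_nontrivial_hyperplane_split {1..m + r} (lpm_bases r P Q)"
proof -
  interpret lpm m r P Q by unfold_locales (rule assms)+
  define \<B> where "\<B> = lpm_bases r P Q"
  have Beq: "\<B> = CF (height P) (height Q) (m+r) r" unfolding \<B>_def by (rule bases_eq)
  have finB: "finite \<B>"
  proof -
    have "\<B> \<subseteq> Pow {1..m+r}" unfolding Beq CF_def by auto
    then show ?thesis by (rule finite_subset) simp
  qed
  have jr: "j + 1 \<le> r" using assms(4,5) by simp
  have hQx: "j + 1 \<le> height Q x" using NPQ[of "j+1" x] jr assms(8) by simp
  have hPx: "height P x < j" using NPP[of j x] jr assms(4,7) by simp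
  have NSP: "NS P \<in> \<B>" and NSQ: "NS Q \<in> \<B>"
    unfolding Beq CF_def using NS_sub[of P] NS_sub[of Q] lenP lenQ card_NS[OF lpP] card_NS[OF lpQ]
      hPQ height_cnt by auto
  have cP: "cnt (NS P) x = height P x" and cQ: "cnt (NS Q) x = height Q x" using height_cnt by auto
  define k where "k B = int (cnt B x)" for B
  define \<B>1 where "\<B>1 = {B\<in>\<B>. int j \<le> k B}"
  define \<B>2 where "\<B>2 = {B\<in>\<B>. k B \<le> int j}"
  have bal: "\<exists>B1\<in>\<B>. \<exists>B2\<in>\<B>. indicator_vec B + indicator_vec B' = indicator_vec B1 + indicator_vec B2 \<and>
        k B1 + k B2 = k B + k B' \<and> \<bar>k B1 - k B2\<bar> \<le> 1" if "B \<in> \<B>" "B' \<in> \<B>" for B B'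
  proof -
    have bb: "B \<in> CF (height P) (height Q) (m+r) r" "B' \<in> CF (height P) (height Q) (m+r) r"
      using that Beq by auto
    obtain B1 B2 where "B1 \<in> \<B>" "B2 \<in> \<B>" "indicator_vec B + indicator_vec B' = indicator_vec B1 + indicator_vec B2"
      and all: "\<forall>t. cnt B1 t + cnt B2 t = cnt B t + cnt B' t \<and> cnt B2 t \<le> cnt B1 t \<and> cnt B1 t \<le> cnt B2 t + 1"
      using CF_balance[OF bb] unfolding Beq by blast
    moreover have e: "cnt B1 x + cnt B2 x = cnt B x + cnt B' x" "cnt B2 x \<le> cnt B1 x" "cnt B1 x \<le> cnt B2 x + 1"
      using all by blast+
    moreover have "k B1 + k B2 = k B + k B'" unfolding k_def using e(1) by (metis of_nat_add)
    moreover have "\<bar>k B1 - k B2\<bar> \<le> 1" unfolding k_def using e(2,3) by (simp add: abs_if)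
    ultimately show ?thesis by blast
  qed
  have bal': "\<exists>B1\<in>\<B>. \<exists>B2\<in>\<B>. indicator_vec B + indicator_vec B' = indicator_vec B1 + indicator_vec B2 \<and>
        - k B1 + - k B2 = - k B + - k B' \<and> \<bar>- k B1 - - k B2\<bar> \<le> 1" if hb: "B \<in> \<B>" "B' \<in> \<B>" for B B'
  proof -
    obtain B1 B2 where "B1 \<in> \<B>" "B2 \<in> \<B>" "indicator_vec B + indicator_vec B' = indicator_vec B1 + indicator_vec B2"
      "k B1 + k B2 = k B + k B'" "\<bar>k B1 - k B2\<bar> \<le> 1" using bal[OF hb] by blast
    moreover have "- k B1 + - k B2 = - k B + - k B'" using calculation(4) by linarith
    moreover have "\<bar>- k B1 - - k B2\<bar> \<le> 1" using calculation(5) by linarith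
    ultimately show ?thesis by blast
  qed
  have lin: "L x (\<Sum>B\<in>\<B>. l B *\<^sub>R indicator_vec B) = (\<Sum>B\<in>\<B>. l B * of_int (k B))" for l
    using L_sum[OF finB] unfolding k_def by simp
  have lin': "- L x (\<Sum>B\<in>\<B>. l B *\<^sub>R indicator_vec B) = (\<Sum>B\<in>\<B>. l B * of_int (- k B))" for l
    using lin[of l] by (simp add: sum_negf)
  have split1: "p \<in> base_polytope \<B>1" if "p \<in> base_polytope \<B>" "real j \<le> L x p" for p
    unfolding \<B>1_def using hull_split[OF finB bal lin that(1), of "int j"] that(2) by simp
  have split2: "p \<in> base_polytope \<B>2" if "p \<in> base_polytope \<B>" "L x p \<le> real j" for p
  proof -
    have "p \<in> base_polytope {B\<in>\<B>. - int j \<le> - k B}"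
      using hull_split[of \<B> "\<lambda>B. - k B" "\<lambda>p. - L x p", OF finB bal' lin' that(1), of "- int j"] that(2) by simp
    moreover have "{B\<in>\<B>. - int j \<le> - k B} = \<B>2" unfolding \<B>2_def by auto
    ultimately show ?thesis by simp
  qed
  have sub1: "base_polytope \<B>1 \<subseteq> {p. real j \<le> L x p}"
    unfolding base_polytope_def
    by (rule hull_minimal) (auto simp: \<B>1_def k_def L_ind conv_ge)
  have sub2: "base_polytope \<B>2 \<subseteq> {p. L x p \<le> real j}"
    unfolding base_polytope_def
    by (rule hull_minimal) (auto simp: \<B>2_def k_def L_ind conv_le)
  have mono1: "base_polytope \<B>1 \<subseteq> base_polytope \<B>" and mono2: "base_polytope \<B>2 \<subseteq> base_polytope \<B>"
    unfolding base_polytope_def \<B>1_def \<B>2_def by (auto intro!: hull_mono)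
  have union: "base_polytope \<B> = base_polytope \<B>1 \<union> base_polytope \<B>2"
  proof
    show "base_polytope \<B> \<subseteq> base_polytope \<B>1 \<union> base_polytope \<B>2"
    proof
      fix p assume "p \<in> base_polytope \<B>"
      then show "p \<in> base_polytope \<B>1 \<union> base_polytope \<B>2"
        using split1 split2 by (cases "real j \<le> L x p") auto
    qed
    show "base_polytope \<B>1 \<union> base_polytope \<B>2 \<subseteq> base_polytope \<B>" using mono1 mono2 by auto
  qed
  have inter: "base_polytope \<B>1 \<inter> base_polytope \<B>2 = base_polytope \<B>1 \<inter> {p. L x p = real j}"
    using sub1 sub2 mono1 split2 by fastforce
  have inter2: "base_polytope \<B>1 \<inter> base_polytope \<B>2 = base_polytope \<B>2 \<inter> {p. L x p = real j}"
    using sub1 sub2 mono2 split1 by fastforce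
  have face1: "(base_polytope \<B>1 \<inter> base_polytope \<B>2) face_of base_polytope \<B>1"
    unfolding inter using sub1 by (intro face_gen[where s=1]) (auto simp: base_polytope_def)
  have face2: "(base_polytope \<B>1 \<inter> base_polytope \<B>2) face_of base_polytope \<B>2"
    unfolding inter2 using sub2 by (intro face_gen[where s="-1"]) (auto simp: base_polytope_def)
  define lo1 where "lo1 t = (if t = x then max j (height P t) else height P t)" for t
  define hi2 where "hi2 t = (if t = x then min j (height Q t) else height Q t)" for t
  have B1eq: "\<B>1 = CF lo1 (height Q) (m+r) r"
    unfolding \<B>1_def Beq CF_def lo1_def k_def by (auto split: if_splits)
  have B2eq: "\<B>2 = CF (height P) hi2 (m+r) r"
    unfolding \<B>2_def Beq CF_def hi2_def k_def by (auto split: if_splits)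
  have NSQ1: "NS Q \<in> \<B>1" unfolding \<B>1_def k_def using NSQ cQ hQx by simp
  have NSP2: "NS P \<in> \<B>2" unfolding \<B>2_def k_def using NSP cP hPx by simp
  have mat1: "matroid_bases {1..m+r} \<B>1" unfolding B1eq by (rule CF_matroid) (use NSQ1 B1eq in auto)
  have mat2: "matroid_bases {1..m+r} \<B>2" unfolding B2eq by (rule CF_matroid) (use NSP2 B2eq in auto)
  have ne1: "base_polytope \<B>1 \<noteq> base_polytope \<B>"
  proof
    assume "base_polytope \<B>1 = base_polytope \<B>"
    moreover have "indicator_vec (NS P) \<in> base_polytope \<B>"
      unfolding base_polytope_def using NSP by (auto intro: hull_inc)
    ultimately have "real j \<le> L x (indicator_vec (NS P))" using sub1 by auto
    then show False using L_ind cP hPx by simp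
  qed
  have ne2: "base_polytope \<B>2 \<noteq> base_polytope \<B>"
  proof
    assume "base_polytope \<B>2 = base_polytope \<B>"
    moreover have "indicator_vec (NS Q) \<in> base_polytope \<B>"
      unfolding base_polytope_def using NSQ by (auto intro: hull_inc)
    ultimately have "L x (indicator_vec (NS Q)) \<le> real j" using sub2 by auto
    then show False using L_ind cQ hQx by simp
  qed
  show ?thesis unfolding has_nontrivial_hyperplane_split_def \<B>_def[symmetric]
    using mat1 mat2 union face1 face2 ne1 ne2 by blast
qed


end
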